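(* Let $c>0$, $\beta\in[0,1)$, $a>0$ and $n\in\mathbb{N}$ with $n>3c$. Let $f\in C_{\rho_0}(\mathbb{R}^+)$, with $M_f$ a constant such that $|f(x)|\le M_f(1+x^2)$ for all $x\ge0$, and let $\omega_{a+1}(f,\delta)$ be its modulus of continuity on $[0,a+1]$. Then for every $x\in[0,a]$, $$|\mathcal{D}_{n,c}^{\beta}(f,x)-f(x)|\le 6M_f(1+a^2)\,\mu_{2,n,c}^{\beta}(x)+2\,\omega_{a+1}\Big(f,\sqrt{\mu_{2,n,c}^{\beta}(x)}\Big).$$
   Context: For $\beta\in[0,1)$, $x\ge 0$, $n\in\mathbb{N}$ and integers $v\ge0$ let $\omega_\beta(v,nx)=nx(nx+v\beta)^{v-1}\frac{e^{-(nx+v\beta)}}{v!}$. For $c>0$, integers $v\ge1$ and $t\ge0$ let $p_{n,v-1,c}(t)=c\,\frac{\Gamma(n/c+v-1)}{\Gamma(v)\Gamma(n/c)}\cdot\frac{(ct)^{v-1}}{(1+ct)^{n/c+v-1}}$. The modified Jain-Baskakov operators are $$\mathcal{D}_{n,c}^{\beta}(f,x)=\frac{n-c}{c}\sum_{v=1}^{\infty}\omega_\beta(v,nx)\int_0^\infty p_{n,v-1,c}(t)f(t)\,dt+e^{-nx}f(0).$$ $\mu_{2,n,c}^{\beta}(x)=\mathcal{D}_{n,c}^{\beta}((t-x)^2,x)$, the operator applied to $t\mapsto(t-x)^2$ evaluated at $x$. With $\rho_0(x)=1+x^2$, $B_{\rho_0}(\mathbb{R}^+)$ is the set of functions $f$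 on $[0,\infty)$ with $|f(x)|\le M_f(1+x^2)$ for some constant $M_f$, and $C_{\rho_0}(\mathbb{R}^+)$ is the set of continuous $f\in B_{\rho_0}(\mathbb{R}^+)$ such that $f(x)/\rho_0(x)$ converges as $x\to\infty$. $\omega_{a+1}(f,\delta)=\sup\{|f(t)-f(x)|: x,t\in[0,a+1],\ |t-x|\le\delta\}$. *)

theory Defs
  imports "HOL-Analysis.Analysis"
begin

definition omega_beta :: "real \<Rightarrow> nat \<Rightarrow> real \<Rightarrow> real" where
  "omega_beta \<beta> v y = y * (y + real v * \<beta>) ^ (v - 1) * exp (- (y + real v * \<beta>)) / fact v"

(* p_{n,v-1,c}(t), with the index v >= 1 given as the argument v *)
definition p_kernel :: "nat \<Rightarrow> nat \<Rightarrow> real \<Rightarrow> real \<Rightarrow> real" where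
  "p_kernel n v c t = c * Gamma (real n / c + real v - 1) / (Gamma (real v) * Gamma (real n / c))
      * (c * t) ^ (v - 1) / (1 + c * t) powr (real n / c + real v - 1)"

definition jain_baskakov :: "nat \<Rightarrow> real \<Rightarrow> real \<Rightarrow> (real \<Rightarrow> real) \<Rightarrow> real \<Rightarrow> real" where
  "jain_baskakov n c \<beta> f x =
     (real n - c) / c * (\<Sum>k. omega_beta \<beta> (Suc k) (real n * x) *
        (LINT t:{0..}|lborel. p_kernel n (Suc k) c t * f t))
     + exp (- (real n * x)) * f 0"

definition mu2 :: "nat \<Rightarrow> real \<Rightarrow> real \<Rightarrow> real \<Rightarrow> real" where
  "mu2 n c \<beta> x = jain_baskakov n c \<beta> (\<lambda>t. (t - x)^2) x"

definition B_rho0 :: "(real \<Rightarrow> real) set" where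
  "B_rho0 = {f. \<exists>M. \<forall>x\<ge>0. \<bar>f x\<bar> \<le> M * (1 + x^2)}"

definition C_rho0 :: "(real \<Rightarrow> real) set" where
  "C_rho0 = {f. f \<in> B_rho0 \<and> continuous_on {0..} f \<and>
     (\<exists>L. ((\<lambda>x. f x / (1 + x^2)) \<longlongrightarrow> L) at_top)}"

definition modulus_cont :: "real \<Rightarrow> (real \<Rightarrow> real) \<Rightarrow> real \<Rightarrow> real" where
  "modulus_cont b f \<delta> = Sup {\<bar>f t - f x\<bar> | x t. x \<in> {0..b} \<and> t \<in> {0..b} \<and> \<bar>t - x\<bar> \<le> \<delta>}"

end

theory Submission
  imports Defs "HOL-Analysis.Analysis" "HOL-Real_Asymp.Real_Asymp"
begin


definition abel :: "real \<Rightarrow> nat \<Rightarrow> real \<Rightarrow> real" where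
  "abel z k x = (if k = 0 then 1 else x * (x + real k * z)^(k-1))"

lemma abel_deriv: "(abel z (Suc k) has_real_derivative (real (Suc k) * abel z k (x+z))) (at x)"
proof (cases k)
  case 0
  then show ?thesis unfolding abel_def by (auto intro!: derivative_eq_intros)
next
  case (Suc j)
  have e: "abel z (Suc k) = (\<lambda>x. x * (x + real (Suc k) * z)^k)" by (auto simp: abel_def fun_eq_iff)
  have "((\<lambda>x. x * (x + real (Suc k) * z)^k) has_real_derivative
     (1 * (x + real (Suc k) * z)^k + x * (real k * (x + real (Suc k) * z)^(k-1) * 1))) (at x)"
    by (auto intro!: derivative_eq_intros)
  moreover have "1 * (x + real (Suc k) * z)^k + x * (real k * (x + real (Suc k) * z)^(k-1) * 1)
     = real (Suc k) * abel z k (x+z)"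
  proof -
    have w: "(x + real (Suc k) * z)^k = (x + real (Suc k) * z) * (x + real (Suc k) * z)^j"
      using Suc by simp
    show ?thesis using Suc unfolding abel_def w by (simp add: algebra_simps)
  qed
  ultimately show ?thesis using e by simp
qed

lemma abel_zero: "k > 0 \<Longrightarrow> abel z k 0 = 0" by (simp add: abel_def)

definition abelsum :: "real \<Rightarrow> nat \<Rightarrow> real \<Rightarrow> real \<Rightarrow> real" where
  "abelsum z N x y = (\<Sum>k\<le>N. real (N choose k) * abel z k x * (y - real k * z)^(N-k))"

lemma abel_identity: "abelsum z N x y = (x+y)^N"
proof (induction N arbitrary: x y)
  case 0
  then show ?case by (simp add: abelsum_def abel_def)
next
  case (Suc N)
  define F where "F = (\<lambda>x. abelsum z (Suc N) x y - (x+y)^(Suc N))"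
  have "(F has_real_derivative 0) (at x)" for x
  proof -
    define g where "g = (\<lambda>x k. real (Suc N choose k) * abel z k x * (y - real k * z)^(Suc N-k))"
    define g' where "g' = (\<lambda>k. if k = 0 then 0 else real (Suc N choose k) * (real k * abel z (k-1) (x+z)) * (y - real k * z)^(Suc N-k))"
    have d: "((\<lambda>x. g x k) has_real_derivative g' k) (at x)" for k
    proof (cases k)
      case 0 then show ?thesis by (simp add: g_def g'_def abel_def)
    next
      case (Suc j)
      show ?thesis unfolding g_def g'_def using Suc
        by (auto intro!: derivative_eq_intros abel_deriv[THEN DERIV_cong])
    qed
    have "sum g' {..Suc N} = g' 0 + (\<Sum>k\<le>N. g' (Suc k))" by (rule sum.atMost_Suc_shift)
    also have "\<dots> = (\<Sum>k\<le>N. real (Suc N) * (real (N choose k) * abel z k (x+z) * ((y - z) - real k * z)^(N-k)))"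
    proof (rule trans[OF _ sum.cong[OF refl]])
      show "g' 0 + (\<Sum>k\<le>N. g' (Suc k)) = (\<Sum>k\<le>N. g' (Suc k))" by (simp add: g'_def)
    next
      fix k assume "k \<in> {..N}"
      have b: "real (Suc N choose Suc k) * real (Suc k) = real (Suc N) * real (N choose k)"
        by (metis Suc_times_binomial_eq mult.commute of_nat_mult)
      have ey: "(y - real (Suc k) * z) = ((y - z) - real k * z)" by (simp add: algebra_simps)
      have "g' (Suc k) = (real (Suc N choose Suc k) * real (Suc k)) * abel z k (x+z) * ((y - z) - real k * z)^(N-k)"
        unfolding g'_def ey by (simp only: nat.distinct if_False diff_Suc_1 diff_Suc_Suc)
      then show "g' (Suc k) = real (Suc N) * (real (N choose k) * abel z k (x+z) * ((y - z) - real k * z)^(N-k))"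
        unfolding b by (simp add: mult_ac)
    qed
    also have "\<dots> = real (Suc N) * abelsum z N (x+z) (y-z)" by (simp add: abelsum_def sum_distrib_left)
    also have "\<dots> = real (Suc N) * (x+y)^N" using Suc.IH by simp
    finally have s: "sum g' {..Suc N} = real (Suc N) * (x+y)^N" .
    have "((\<lambda>x. sum (g x) {..Suc N}) has_real_derivative sum g' {..Suc N}) (at x)"
      by (rule DERIV_sum) (rule d)
    moreover have "(\<lambda>x. abelsum z (Suc N) x y) = (\<lambda>x. sum (g x) {..Suc N})"
      by (simp add: abelsum_def g_def fun_eq_iff)
    ultimately have "((\<lambda>x. abelsum z (Suc N) x y) has_real_derivative sum g' {..Suc N}) (at x)" by simp
    then show ?thesis unfolding F_def using s
      by (auto intro!: derivative_eq_intros) (cases N, auto simp: algebra_simps)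
  qed
  then have "F x = F 0" by (intro DERIV_isconst_all) auto
  moreover have "F 0 = 0"
  proof -
    have "abelsum z (Suc N) 0 y = (\<Sum>k\<le>Suc N. if k = 0 then y^(Suc N) else 0)"
      unfolding abelsum_def by (rule sum.cong) (auto simp: abel_def)
    then show ?thesis by (simp add: F_def)
  qed
  ultimately show ?case by (simp add: F_def)
qed


lemma binom_limit: "(\<lambda>N. real (N choose k) / real N ^ k) \<longlonglongrightarrow> 1 / fact k"
proof (induction k)
  case 0
  then show ?case by simp
next
  case (Suc k)
  have l: "(\<lambda>M. (real (M choose k) / real M ^ k) * (real M / real (Suc M))^k / real (Suc k))
     \<longlonglongrightarrow> (1 / fact k) * 1^k / real (Suc k)"
    by (intro tendsto_intros Suc.IH LIMSEQ_n_over_Suc_n) auto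
  have e: "eventually (\<lambda>M. (real (M choose k) / real M ^ k) * (real M / real (Suc M))^k / real (Suc k)
     = real (Suc M choose Suc k) / real (Suc M) ^ Suc k) sequentially"
    unfolding eventually_sequentially
  proof (intro exI[of _ 1] allI impI)
    fix M :: nat assume "1 \<le> M"
    have h: "real (Suc M) * real (M choose k) = real (Suc M choose Suc k) * real (Suc k)"
      by (metis Suc_times_binomial_eq of_nat_mult)
    define SM where "SM = real (Suc M)"
    define Sk where "Sk = real (Suc k)"
    define C where "C = real (M choose k)"
    define C' where "C' = real (Suc M choose Suc k)"
    have h': "SM * C = C' * Sk" using h by (simp add: SM_def C_def C'_def Sk_def)
    have pos: "SM > 0" "Sk > 0" "real M > 0" using \<open>1 \<le> M\<close> by (auto simp: SM_def Sk_def)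
    have "(C / real M ^ k) * (real M / SM)^k / Sk = C / SM^k / Sk"
      using pos by (simp add: power_divide)
    also have "\<dots> = C' / SM ^ Suc k" using h' pos by (simp add: field_simps)
    finally show "(real (M choose k) / real M ^ k) * (real M / real (Suc M))^k / real (Suc k)
     = real (Suc M choose Suc k) / real (Suc M) ^ Suc k" by (simp only: SM_def Sk_def C_def C'_def)
  qed
  have "(\<lambda>M. real (Suc M choose Suc k) / real (Suc M) ^ Suc k) \<longlonglongrightarrow> 1 / fact (Suc k)"
    using tendsto_cong[OF e] l by (simp add: field_simps)
  then show ?case by (rule LIMSEQ_imp_Suc)
qed


lemma rho_lt1: fixes b :: real assumes "0 \<le> b" "b < 1" shows "b * exp (1 - b) < 1"
proof -
  define u where "u = b - 1"
  have "exp (u/2) \<ge> 1 + u/2" by simp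
  moreover have "1 + u/2 \<ge> 0" unfolding u_def using assms by (simp add: field_simps)
  ultimately have "(1 + u/2)^2 \<le> exp (u/2)^2" by (intro power_mono) auto
  also have "exp (u/2)^2 = exp u" by (simp add: exp_double[symmetric])
  finally have "1 + u + u^2/4 \<le> exp u" by (simp add: power2_eq_square field_simps)
  moreover have "u^2 > 0" using assms by (simp add: u_def)
  ultimately have "b < exp (b - 1)" unfolding u_def by (smt (verit) divide_pos_pos)
  then have "b * exp (1 - b) < exp (b - 1) * exp (1 - b)" by (intro mult_strict_right_mono) auto
  also have "\<dots> = 1" by (simp add: exp_add[symmetric])
  finally show ?thesis .
qed

lemma summable_poly_geom: assumes "0 \<le> r" "r < 1" shows "summable (\<lambda>k. real k ^ m * r ^ k)"
proof -
  define s where "s = (1 + r) / 2"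
  have "s < 1" "r < s" using assms by (auto simp: s_def)
  have "(\<lambda>k. (1 + 1 / real k) ^ m * r) \<longlonglongrightarrow> (1 + 0)^m * r"
    by (intro tendsto_intros lim_const_over_n)
  then have "eventually (\<lambda>k. (1 + 1 / real k) ^ m * r < s) sequentially"
    using \<open>r < s\<close> by (intro order_tendstoD) auto
  then obtain K where K: "\<And>k. k \<ge> K \<Longrightarrow> (1 + 1 / real k) ^ m * r < s"
    unfolding eventually_sequentially by blast
  show ?thesis
  proof (rule summable_ratio_test[of s "Suc K"])
    show "s < 1" by fact
    fix k assume "Suc K \<le> k"
    then have k: "k \<ge> K" "k > 0" by auto
    have "real (Suc k) ^ m = (1 + 1 / real k) ^ m * real k ^ m"
      using k by (simp add: power_mult_distrib[symmetric] field_simps)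
    then have "norm (real (Suc k) ^ m * r ^ Suc k) = ((1 + 1 / real k) ^ m * r) * (real k ^ m * r ^ k)"
      using assms by (simp add: algebra_simps)
    also have "\<dots> \<le> s * (real k ^ m * r ^ k)"
      using K[OF k(1)] assms by (intro mult_right_mono) auto
    also have "\<dots> = s * norm (real k ^ m * r ^ k)" using assms by simp
    finally show "norm (real (Suc k) ^ m * r ^ Suc k) \<le> s * norm (real k ^ m * r ^ k)" .
  qed
qed

definition Mj :: "real \<Rightarrow> real \<Rightarrow> nat \<Rightarrow> real" where
  "Mj b y k = abel b k y * exp (real k * (1 - b)) / real k ^ k"

lemma abel_nonneg: "0 \<le> b \<Longrightarrow> 0 \<le> y \<Longrightarrow> 0 \<le> abel b k y"
  by (simp add: abel_def)

lemma Mj_nonneg: "0 \<le> b \<Longrightarrow> 0 \<le> y \<Longrightarrow> 0 \<le> Mj b y k"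
  by (simp add: Mj_def abel_nonneg)

lemma summable_Mj: assumes "0 \<le> b" "b < 1" "0 \<le> y"
  shows "summable (\<lambda>k. real k ^ m * Mj b y k)"
proof -
  define \<rho> where "\<rho> = b * exp (1 - b)"
  have "\<rho> < 1" using rho_lt1 assms by (simp add: \<rho>_def)
  have "\<rho> \<ge> 0" using assms by (simp add: \<rho>_def)
  define r where "r = (1 + \<rho>) / 2"
  have r: "\<rho> < r" "r < 1" "0 \<le> r" using \<open>\<rho> < 1\<close> \<open>\<rho> \<ge> 0\<close> by (auto simp: r_def)
  obtain K :: nat where K: "real K > y * exp (1 - b) / (r - \<rho>)" using reals_Archimedean2 by blast
  show ?thesis
  proof (rule summable_comparison_test')
    show "summable (\<lambda>k. real k ^ m * r ^ k)" by (rule summable_poly_geom) (use r in auto)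
    fix k assume "k \<ge> Suc K"
    then have k: "real k > y * exp (1 - b) / (r - \<rho>)" "k > 0" using K
      by (auto intro: less_le_trans)
    have "abel b k y \<le> (y + real k * b)^k"
    proof -
      obtain j where j: "k = Suc j" using k(2) by (cases k) auto
      have "abel b k y = y * (y + real k * b)^j" by (simp add: abel_def j)
      also have "\<dots> \<le> (y + real k * b) * (y + real k * b)^j"
        using assms by (intro mult_right_mono) auto
      finally show ?thesis by (simp add: j)
    qed
    then have "Mj b y k \<le> (y + real k * b)^k * exp (real k * (1 - b)) / real k ^ k"
      unfolding Mj_def by (intro divide_right_mono mult_right_mono) auto
    also have "\<dots> = ((y / real k + b) * exp (1 - b)) ^ k"
    proof -
      have e1: "exp (real k * (1 - b)) = exp (1 - b) ^ k" by (rule exp_of_nat_mult)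
      have e2: "(y + real k * b) / real k = y / real k + b" using k(2) by (simp add: field_simps)
      have "(y + real k * b)^k * exp (real k * (1 - b)) / real k ^ k
          = ((y + real k * b) / real k)^k * exp (1 - b) ^ k" unfolding e1 by (simp add: power_divide)
      also have "\<dots> = ((y / real k + b) * exp (1 - b)) ^ k" unfolding e2 by (simp add: power_mult_distrib)
      finally show ?thesis .
    qed
    also have "\<dots> \<le> r ^ k"
    proof (intro power_mono)
      have "y / real k * exp (1 - b) \<le> r - \<rho>"
        using k r by (simp add: field_simps mult.commute)
      then show "(y / real k + b) * exp (1 - b) \<le> r" by (simp add: \<rho>_def algebra_simps)
      show "0 \<le> (y / real k + b) * exp (1 - b)" using assms by auto
    qed
    finally have "Mj b y k \<le> r ^ k" .
    then show "norm (real k ^ m * Mj b y k) \<le> real k ^ m * r ^ k"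
      using Mj_nonneg[OF assms(1,3)] by (simp add: mult_left_mono)
  qed
qed


definition aN :: "real \<Rightarrow> real \<Rightarrow> nat \<Rightarrow> nat \<Rightarrow> real" where
  "aN b y k N = (if k \<le> N then abel b k y * real (N choose k) * (real N - real k * b)^(N-k) / real N ^ N else 0)"

lemma binom_entropy: assumes "k \<le> N"
  shows "real (N choose k) * real k ^ k * real (N-k) ^ (N-k) \<le> real N ^ N"
proof -
  have "real N ^ N = (real k + real (N-k)) ^ N" using assms by simp
  also have "\<dots> = (\<Sum>j\<le>N. real (N choose j) * real k ^ j * real (N-k) ^ (N - j))"
    by (rule binomial_ring)
  also have "\<dots> \<ge> real (N choose k) * real k ^ k * real (N-k) ^ (N - k)"
    by (rule member_le_sum[where f = "\<lambda>j. real (N choose j) * real k ^ j * real (N-k) ^ (N - j)"])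
       (use assms in auto)
  finally show ?thesis .
qed

lemma pow_exp_bound: assumes "k \<le> N" "0 \<le> b" "b < 1"
  shows "(real N - real k * b)^(N-k) \<le> real (N-k) ^ (N-k) * exp (real k * (1 - b))"
proof (cases "N = k")
  case True
  then show ?thesis using assms by simp
next
  case False
  define m where "m = N - k"
  have m: "m > 0" "real N = real m + real k" using False assms by (auto simp: m_def)
  have "real N - real k * b = real m * (1 + real k * (1 - b) / real m)"
    using m by (simp add: field_simps)
  then have "(real N - real k * b)^(N-k) = real m ^ m * (1 + real k * (1 - b) / real m) ^ m"
    by (simp add: m_def power_mult_distrib)
  also have "\<dots> \<le> real m ^ m * exp (real k * (1 - b))"
  proof -
    have h: "real k * (1 - b) \<ge> 0" using assms by auto
    have "- real m \<le> real k * (1 - b)" using h m by linarith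
    then show ?thesis using m by (intro mult_left_mono exp_ge_one_plus_x_over_n_power_n) auto
  qed
  finally show ?thesis by (simp add: m_def)
qed

lemma aN_bound: assumes "0 \<le> b" "b < 1" "0 \<le> y"
  shows "0 \<le> aN b y k N \<and> aN b y k N \<le> Mj b y k"
proof (cases "k \<le> N")
  case False
  then show ?thesis using Mj_nonneg assms by (simp add: aN_def)
next
  case True
  have A: "0 \<le> real N - real k * b"
  proof -
    have "real k * b \<le> real k * 1" using assms by (intro mult_left_mono) auto
    then show ?thesis using True by linarith
  qed
  have ab: "0 \<le> abel b k y" using abel_nonneg assms by auto
  have NN: "real N ^ N > 0" by (cases N) auto
  have kk: "real k ^ k > 0" by (cases k) auto
  have "real (N choose k) * (real N - real k * b)^(N-k)
     \<le> real (N choose k) * (real (N-k) ^ (N-k) * exp (real k * (1 - b)))"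
    using pow_exp_bound[OF True assms(1,2)] by (intro mult_left_mono) auto
  also have "\<dots> = (real (N choose k) * real k ^ k * real (N-k) ^ (N-k)) * exp (real k * (1 - b)) / real k ^ k"
    using kk by (simp add: field_simps)
  also have "\<dots> \<le> real N ^ N * exp (real k * (1 - b)) / real k ^ k"
    using binom_entropy[OF True] kk by (intro divide_right_mono mult_right_mono) auto
  finally have key: "real (N choose k) * (real N - real k * b)^(N-k) \<le> real N ^ N * exp (real k * (1 - b)) / real k ^ k" .
  have "aN b y k N = abel b k y * (real (N choose k) * (real N - real k * b)^(N-k)) / real N ^ N"
    using True by (simp add: aN_def mult.assoc)
  also have "\<dots> \<le> abel b k y * (real N ^ N * exp (real k * (1 - b)) / real k ^ k) / real N ^ N"
    using key ab NN by (intro divide_right_mono mult_left_mono) auto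
  also have "\<dots> = Mj b y k" using NN by (simp add: Mj_def)
  finally show ?thesis using True A ab NN by (simp add: aN_def)
qed

lemma aN_lim: assumes "0 \<le> b" "b < 1"
  shows "(\<lambda>N. aN b y k N) \<longlonglongrightarrow> abel b k y * exp (- (real k * b)) / fact k"
proof -
  define g where "g = (\<lambda>N. abel b k y * (real (N choose k) / real N ^ k) *
      (1 + (- (real k * b)) / real N) ^ N * inverse (1 + (- (real k * b)) / real N) ^ k)"
  have "g \<longlonglongrightarrow> abel b k y * (1 / fact k) * exp (- (real k * b)) * inverse (1 + 0) ^ k"
    unfolding g_def by (intro tendsto_intros binom_limit tendsto_exp_limit_sequentially lim_const_over_n) auto
  then have g: "g \<longlonglongrightarrow> abel b k y * exp (- (real k * b)) / fact k" by simp
  have "eventually (\<lambda>N. g N = aN b y k N) sequentially"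
    unfolding eventually_sequentially
  proof (intro exI[of _ "Suc k"] allI impI)
    fix N assume "Suc k \<le> N"
    then have N: "k \<le> N" "real N > 0" "real k < real N" by auto
    define A where "A = real N - real k * b"
    have "real k * b \<le> real k" using assms by (simp add: mult_left_le)
    then have A0: "A > 0" using N by (simp add: A_def)
    have q: "1 + (- (real k * b)) / real N = A / real N" using N by (simp add: A_def field_simps)
    have pA: "A ^ N = A ^ (N-k) * A ^ k" using N by (simp add: power_add[symmetric])
    have "g N = abel b k y * real (N choose k) * (A ^ N / (real N ^ k * real N ^ N)) * (real N ^ k / A ^ k)"
      unfolding g_def q using N A0 by (simp add: power_divide power_inverse field_simps)
    also have "\<dots> = abel b k y * real (N choose k) * A ^ (N-k) / real N ^ N"
      unfolding pA using N A0 by (simp add: field_simps)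
    also have "\<dots> = aN b y k N" using N by (simp add: aN_def A_def)
    finally show "g N = aN b y k N" .
  qed
  with g show ?thesis using tendsto_cong by blast
qed

lemma jain: assumes "0 \<le> b" "b < 1" "0 \<le> y"
  shows "summable (\<lambda>k. abel b k y * exp (- (real k * b)) / fact k)"
    and "(\<Sum>k. abel b k y * exp (- (real k * b)) / fact k) = exp y"
proof -
  define B where "B = (\<lambda>k. abel b k y * exp (- (real k * b)) / fact k)"
  have T: "eventually (\<lambda>N. summable (\<lambda>k. norm (aN b y k N))) sequentially \<and>
           summable (\<lambda>n. norm (B n)) \<and>
           ((\<lambda>N. suminf (\<lambda>k. aN b y k N)) \<longlonglongrightarrow> suminf B)"
  proof (rule tannerys_theorem[where M = "Mj b y"])
    show "\<And>k. (\<lambda>N. aN b y k N) \<longlonglongrightarrow> B k" unfolding B_def using aN_lim assms by blast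
    show "\<forall>\<^sub>F (k, N) in at_top \<times>\<^sub>F sequentially. norm (aN b y k N) \<le> Mj b y k"
      by (intro always_eventually) (use aN_bound[OF assms] in auto)
    show "summable (Mj b y)" using summable_Mj[OF assms, of 0] by simp
  qed auto
  have Bnn: "B k \<ge> 0" for k using abel_nonneg assms by (simp add: B_def)
  from T show "summable (\<lambda>k. abel b k y * exp (- (real k * b)) / fact k)"
    using Bnn unfolding B_def[symmetric] by simp
  have e: "eventually (\<lambda>N. (1 + y / real N) ^ N = suminf (\<lambda>k. aN b y k N)) sequentially"
    unfolding eventually_sequentially
  proof (intro exI[of _ 1] allI impI)
    fix N :: nat assume "1 \<le> N"
    have "suminf (\<lambda>k. aN b y k N) = (\<Sum>k\<le>N. aN b y k N)"
      by (rule suminf_finite) (auto simp: aN_def)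
    also have "\<dots> = abelsum b N y (real N) / real N ^ N"
      by (simp add: aN_def abelsum_def sum_divide_distrib mult_ac)
    also have "\<dots> = (y + real N) ^ N / real N ^ N" by (simp add: abel_identity)
    also have "\<dots> = ((y + real N) / real N) ^ N" by (simp only: power_divide)
    also have "(y + real N) / real N = 1 + y / real N" using \<open>1 \<le> N\<close> by (simp add: field_simps)
    finally show "(1 + y / real N) ^ N = suminf (\<lambda>k. aN b y k N)" by simp
  qed
  have "(\<lambda>N. suminf (\<lambda>k. aN b y k N)) \<longlonglongrightarrow> exp y"
    using tendsto_cong[OF e] tendsto_exp_limit_sequentially by blast
  with T have "suminf B = exp y" using LIMSEQ_unique by blast
  then show "(\<Sum>k. abel b k y * exp (- (real k * b)) / fact k) = exp y" by (simp add: B_def)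
qed


lemma Gp1: "(x::real) > 0 \<Longrightarrow> Gamma (x + 1) = x * Gamma x"
  by (rule Gamma_plus1) (auto elim!: nonpos_Ints_cases)

definition Cj :: "real \<Rightarrow> nat \<Rightarrow> nat \<Rightarrow> real" where
  "Cj s v j = Gamma (s + real v) / (fact j * Gamma (s + real v - real j))"

lemma Cj_rec: assumes "s > 0" "j < v"
  shows "(s + real v - 1 - real j) * Cj s v j = real (Suc j) * Cj s v (Suc j)"
proof -
  define z where "z = s + real v - real j - 1"
  have z: "z > 0" using assms by (simp add: z_def)
  have g1: "Gamma (s + real v - real j) = z * Gamma z"
    using Gp1[OF z] by (simp add: z_def)
  have g2: "s + real v - real (Suc j) = z" by (simp add: z_def)
  have Gz: "Gamma z > 0" using z by simp
  have e: "s + real v - 1 - real j = z" by (simp add: z_def)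
  have F: "fact j > (0::real)" by simp
  have c1: "Cj s v j = Gamma (s + real v) / (fact j * (z * Gamma z))"
    unfolding Cj_def g1 ..
  have c2: "Cj s v (Suc j) = Gamma (s + real v) / ((real (Suc j) * fact j) * Gamma z)"
    unfolding Cj_def g2 by (simp only: fact_Suc of_nat_mult)
  show ?thesis unfolding e c1 c2 using z Gz F by (simp add: field_simps del: of_nat_Suc)
qed

definition Pp :: "real \<Rightarrow> nat \<Rightarrow> real \<Rightarrow> real" where
  "Pp s v u = (\<Sum>j<v. Cj s v j * u ^ j)"
definition Pd :: "real \<Rightarrow> nat \<Rightarrow> real \<Rightarrow> real" where
  "Pd s v u = (\<Sum>j<v. Cj s v j * (real j * u ^ (j - 1)))"

lemma Pp_deriv: "(Pp s v has_real_derivative Pd s v u) (at u)"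
  unfolding Pp_def Pd_def
  by (auto intro!: derivative_eq_intros sum.cong simp: mult_ac)

lemma polyid: assumes "s > 0"
  shows "(1 + u) * Pd s v u - (s + real v - 1) * Pp s v u = - (real v * Cj s v v) * u ^ (v - 1)"
proof -
  define T where "T = (\<lambda>j. Cj s v j * real j * u ^ (j - 1))"
  have pt: "(1 + u) * (Cj s v j * (real j * u ^ (j - 1))) - (s + real v - 1) * (Cj s v j * u ^ j)
      = T j - T (Suc j)" if "j < v" for j
  proof -
    have c: "real j * (u * u ^ (j - 1)) = real j * u ^ j"
      by (cases j) auto
    have b: "T (Suc j) = (s + real v - 1 - real j) * Cj s v j * u ^ j"
      using Cj_rec[OF assms that] by (simp add: T_def)
    have "(1 + u) * (Cj s v j * (real j * u ^ (j - 1))) - (s + real v - 1) * (Cj s v j * u ^ j)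
       = Cj s v j * real j * u ^ (j - 1) + Cj s v j * (real j * (u * u ^ (j - 1))) - (s + real v - 1) * (Cj s v j * u ^ j)"
      by (simp add: algebra_simps)
    also have "\<dots> = Cj s v j * real j * u ^ (j - 1) + Cj s v j * (real j * u ^ j) - (s + real v - 1) * (Cj s v j * u ^ j)"
      unfolding c ..
    also have "\<dots> = T j - T (Suc j)" unfolding b by (simp add: T_def algebra_simps)
    finally show ?thesis .
  qed
  have "(1 + u) * Pd s v u - (s + real v - 1) * Pp s v u
     = (\<Sum>j<v. (1 + u) * (Cj s v j * (real j * u ^ (j - 1))) - (s + real v - 1) * (Cj s v j * u ^ j))"
    unfolding Pp_def Pd_def by (simp add: sum_distrib_left sum_subtractf)
  also have "\<dots> = (\<Sum>j<v. T j - T (Suc j))" by (intro sum.cong refl pt) simp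
  also have "\<dots> = T 0 - T v" by (rule sum_lessThan_telescope')
  finally show ?thesis by (simp add: T_def)
qed


lemma ftc0:
  fixes f F :: "real \<Rightarrow> real"
  assumes fb: "f \<in> borel_measurable borel"
    and d: "\<And>x. 0 \<le> x \<Longrightarrow> (F has_real_derivative f x) (at x)"
    and nn: "\<And>x. 0 \<le> x \<Longrightarrow> 0 \<le> f x"
    and lim: "(F \<longlongrightarrow> T) at_top"
  shows "set_integrable lborel {0..} f" "(LINT x:{0..}|lborel. f x) = T - F 0"
proof -
  define G where "G x = F x - F 0" for x
  have dG: "(G has_real_derivative f x) (at x)" if "0 \<le> x" for x
    unfolding G_def using d[OF that] by (auto intro!: derivative_eq_intros)
  have limG: "(G \<longlongrightarrow> T - F 0) at_top" unfolding G_def by (intro tendsto_intros lim)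
  have mono: "F 0 \<le> F x" if "0 \<le> x" for x
    using d nn that by (intro DERIV_nonneg_imp_nondecreasing[of 0 x F]) (auto intro: order_trans)
  have T0: "F 0 \<le> T"
    by (rule tendsto_lowerbound[OF lim]) (auto simp: eventually_at_top_linorder intro!: exI[of _ 0] mono)
  have nnI: "(\<integral>\<^sup>+x. ennreal (f x) * indicator {0 ..} x \<partial>lborel) = (T - F 0) - G 0"
    by (rule nn_integral_FTC_atLeast[OF fb dG nn limG]) auto
  then have nnI': "(\<integral>\<^sup>+x. ennreal (f x * indicator {0 ..} x) \<partial>lborel) = ennreal (T - F 0)"
    by (subst nn_integral_cong[where v = "\<lambda>x. ennreal (f x) * indicator {0 ..} x"])
       (auto simp: G_def split: split_indicator)
  have hb: "has_bochner_integral lborel (\<lambda>x. f x * indicator {0..} x) (T - F 0)"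
    by (rule has_bochner_integral_nn_integral) (use fb nnI' T0 nn in \<open>auto simp: indicator_def\<close>)
  have e: "(\<lambda>x. indicator {0..} x *\<^sub>R f x) = (\<lambda>x. f x * indicator {0..} x)"
    by (auto simp: fun_eq_iff)
  show "set_integrable lborel {0..} f" unfolding set_integrable_def e
    using hb by (simp add: has_bochner_integral_iff)
  show "(LINT x:{0..}|lborel. f x) = T - F 0" unfolding set_lebesgue_integral_def e
    using hb by (simp add: has_bochner_integral_iff)
qed


lemma Phi_deriv: assumes "s > 0" "u > -1"
  shows "((\<lambda>u. (1 + u) powr (-(s + real v - 1)) * Pp s v u) has_real_derivative
          (- (real v * Cj s v v) * u ^ (v - 1) * (1 + u) powr (-(s + real v)))) (at u)"
proof -
  have p: "((\<lambda>u. (1 + u) powr (-(s + real v - 1))) has_real_derivative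
        (-(s + real v - 1)) * (1 + u) powr (-(s + real v - 1) - 1) * 1) (at u)"
    by (rule DERIV_chain2[OF has_real_derivative_powr]) (use assms in \<open>auto intro!: derivative_eq_intros\<close>)
  have "((\<lambda>u. (1 + u) powr (-(s + real v - 1)) * Pp s v u) has_real_derivative
        (-(s + real v - 1)) * (1 + u) powr (-(s + real v - 1) - 1) * 1 * Pp s v u
        + Pd s v u * (1 + u) powr (-(s + real v - 1))) (at u)"
    by (rule DERIV_mult[OF p Pp_deriv])
  moreover have "(-(s + real v - 1)) * (1 + u) powr (-(s + real v - 1) - 1) * 1 * Pp s v u
        + Pd s v u * (1 + u) powr (-(s + real v - 1))
      = - (real v * Cj s v v) * u ^ (v - 1) * (1 + u) powr (-(s + real v))"
  proof -
    have b: "1 + u > 0" using assms by simp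
    have e1: "-(s + real v - 1) - 1 = -(s + real v)" by simp
    have e2: "(1 + u) powr (-(s + real v - 1)) = (1 + u) powr (-(s + real v)) * (1 + u)"
    proof -
      have "(1 + u) powr (-(s + real v - 1)) = (1 + u) powr (-(s + real v) + 1)"
        by (rule arg_cong[where f="\<lambda>e. (1 + u) powr e"]) simp
      also have "\<dots> = (1 + u) powr (-(s + real v)) * (1 + u)" using b by (simp add: powr_add)
      finally show ?thesis .
    qed
    have "(-(s + real v - 1)) * (1 + u) powr (-(s + real v - 1) - 1) * 1 * Pp s v u
        + Pd s v u * (1 + u) powr (-(s + real v - 1))
        = (1 + u) powr (-(s + real v)) * ((1 + u) * Pd s v u - (s + real v - 1) * Pp s v u)"
      unfolding e1 e2 by (simp add: algebra_simps)
    also have "\<dots> = - (real v * Cj s v v) * u ^ (v - 1) * (1 + u) powr (-(s + real v))"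
      unfolding polyid[OF assms(1)] by (simp add: algebra_simps)
    finally show ?thesis .
  qed
  ultimately show ?thesis by simp
qed

lemma lim_term: assumes "s > 0" "j < v"
  shows "((\<lambda>u. u ^ j * (1 + u) powr (-(s + real v - 1))) \<longlongrightarrow> 0) at_top"
proof -
  have l1: "((\<lambda>u::real. u / (1 + u)) \<longlongrightarrow> 1) at_top" by real_asymp
  have f1: "filterlim (\<lambda>u::real. 1 + u) at_top at_top" by real_asymp
  have neg: "real j - (s + real v - 1) < 0" using assms by simp
  have "((\<lambda>u. (u / (1 + u)) ^ j * (1 + u) powr (real j - (s + real v - 1))) \<longlongrightarrow> 1 ^ j * 0) at_top"
    by (intro tendsto_intros l1 tendsto_neg_powr[OF neg f1])
  moreover have "eventually (\<lambda>u. (u / (1 + u)) ^ j * (1 + u) powr (real j - (s + real v - 1))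
       = u ^ j * (1 + u) powr (-(s + real v - 1))) at_top"
    unfolding eventually_at_top_linorder
  proof (intro exI[of _ 1] allI impI)
    fix u :: real assume "u \<ge> 1"
    then have b: "1 + u > 0" by simp
    have "(1 + u) powr (real j - (s + real v - 1)) = (1 + u) powr real j * (1 + u) powr (-(s + real v - 1))"
    proof -
      have "real j - (s + real v - 1) = real j + (-(s + real v - 1))" by simp
      then show ?thesis by (simp only: powr_add)
    qed
    also have "\<dots> = (1 + u) ^ j * (1 + u) powr (-(s + real v - 1))"
      using b by (simp add: powr_realpow)
    finally show "(u / (1 + u)) ^ j * (1 + u) powr (real j - (s + real v - 1))
       = u ^ j * (1 + u) powr (-(s + real v - 1))" using b by (simp add: power_divide)
  qed
  ultimately show ?thesis using tendsto_cong by force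
qed

lemma Phi_lim: assumes "s > 0"
  shows "((\<lambda>u. (1 + u) powr (-(s + real v - 1)) * Pp s v u) \<longlongrightarrow> 0) at_top"
proof -
  have "((\<lambda>u. \<Sum>j<v. Cj s v j * (u ^ j * (1 + u) powr (-(s + real v - 1)))) \<longlongrightarrow> (\<Sum>j<v. Cj s v j * 0)) at_top"
    by (intro tendsto_intros lim_term assms) auto
  moreover have "(\<lambda>u. \<Sum>j<v. Cj s v j * (u ^ j * (1 + u) powr (-(s + real v - 1))))
     = (\<lambda>u. (1 + u) powr (-(s + real v - 1)) * Pp s v u)"
    by (auto simp: fun_eq_iff Pp_def sum_distrib_left mult_ac)
  ultimately show ?thesis by simp
qed

lemma beta_t: fixes s c :: real and v :: nat
  assumes "s > 0" "c > 0" "v \<ge> 1"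
  shows "set_integrable lborel {0..} (\<lambda>t. t^(v-1) * (1 + c*t) powr (-(s + real v)))"
    and "(LINT t:{0..}|lborel. t^(v-1) * (1 + c*t) powr (-(s + real v))) = 1 / (real v * Cj s v v * c^v)"
proof -
  define K where "K = real v * Cj s v v"
  define \<Phi> where "\<Phi> = (\<lambda>u. (1 + u) powr (-(s + real v - 1)) * Pp s v u)"
  define H where "H = (\<lambda>t. - (1 / (K * c^v)) * \<Phi> (c * t))"
  have fb: "(\<lambda>t. t^(v-1) * (1 + c*t) powr (-(s + real v))) \<in> borel_measurable borel" by measurable
  have d: "(H has_real_derivative t^(v-1) * (1 + c*t) powr (-(s + real v))) (at t)" if "0 \<le> t" for t
  proof -
    have ct: "0 \<le> c * t" using assms that by simp
    have "(\<Phi> has_real_derivative (- K * (c*t) ^ (v - 1) * (1 + c*t) powr (-(s + real v)))) (at (c*t))"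
      unfolding \<Phi>_def K_def by (rule Phi_deriv) (use assms ct in auto)
    then have "((\<lambda>t. \<Phi> (c * t)) has_real_derivative (- K * (c*t) ^ (v - 1) * (1 + c*t) powr (-(s + real v))) * c) (at t)"
      by (rule DERIV_chain2) (auto intro!: derivative_eq_intros)
    then have "(H has_real_derivative - (1 / (K * c^v)) * ((- K * (c*t) ^ (v - 1) * (1 + c*t) powr (-(s + real v))) * c)) (at t)"
      unfolding H_def by (rule DERIV_cmult)
    moreover have "- (1 / (K * c^v)) * ((- K * (c*t) ^ (v - 1) * (1 + c*t) powr (-(s + real v))) * c)
       = t^(v-1) * (1 + c*t) powr (-(s + real v))"
    proof -
      have g1: "Gamma (s + real v) > 0" "Gamma s > 0" using assms by (auto intro!: Gamma_real_pos)
      have g2: "Gamma (s + real v) \<noteq> 0" "Gamma s \<noteq> 0" using g1 by auto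
      have K0: "K \<noteq> 0" unfolding K_def Cj_def using assms g2 by simp
      have cv: "c ^ v = c ^ (v - 1) * c" using assms by (cases v) auto
      show ?thesis using K0 assms unfolding cv by (simp add: power_mult_distrib field_simps)
    qed
    ultimately show ?thesis by simp
  qed
  have nn: "0 \<le> t^(v-1) * (1 + c*t) powr (-(s + real v))" if "0 \<le> t" for t using that by simp
  have lim: "(H \<longlongrightarrow> - (1 / (K * c^v)) * 0) at_top"
  proof -
    have fc: "filterlim (\<lambda>t. c * t) at_top at_top"
      by (rule filterlim_tendsto_pos_mult_at_top[OF tendsto_const assms(2) filterlim_ident])
    have "((\<lambda>t. \<Phi> (c * t)) \<longlongrightarrow> 0) at_top"
      using filterlim_compose[OF Phi_lim[OF assms(1)] fc] unfolding \<Phi>_def by simp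
    then show ?thesis unfolding H_def by (intro tendsto_intros)
  qed
  have H0: "H 0 = - (1 / (K * c^v))"
  proof -
    have "Pp s v 0 = Cj s v 0" unfolding Pp_def using assms
      by (subst sum.remove[of _ 0]) (auto simp: power_0_left)
    moreover have "Cj s v 0 = 1"
    proof -
      have "Gamma (s + real v) > 0" using assms by (auto intro!: Gamma_real_pos)
      then show ?thesis unfolding Cj_def by simp
    qed
    ultimately show ?thesis by (simp add: H_def \<Phi>_def)
  qed
  note r = ftc0[OF fb d nn lim]
  show "set_integrable lborel {0..} (\<lambda>t. t^(v-1) * (1 + c*t) powr (-(s + real v)))" using r(1) .
  show "(LINT t:{0..}|lborel. t^(v-1) * (1 + c*t) powr (-(s + real v))) = 1 / (real v * Cj s v v * c^v)"
    using r(2) H0 by (simp add: K_def)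
qed


lemma p_kernel_nonneg: assumes "c > 0" "real n > c" "v \<ge> 1" "t \<ge> 0"
  shows "p_kernel n v c t \<ge> 0"
proof -
  have s: "real n / c > 1" using assms by (simp add: field_simps)
  have rv: "real v \<ge> 1" using assms by simp
  have a1: "real n / c + real v - 1 > 0" "real v > 0" "real n / c > 0" using s rv by linarith+
  have "Gamma (real n / c + real v - 1) > 0" "Gamma (real v) > 0" "Gamma (real n / c) > 0"
    using Gamma_real_pos a1 by blast+
  then show ?thesis unfolding p_kernel_def using assms by auto
qed

lemma p_kernel_meas: "p_kernel n v c \<in> borel_measurable borel"
  unfolding p_kernel_def by measurable

lemma p_kernel_moment:
  fixes c :: real and n v m :: nat
  assumes "c > 0" "real n / c - 1 - real m > 0" "v \<ge> 1"
  defines "\<sigma> \<equiv> real n / c - 1 - real m"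
  shows "set_integrable lborel {0..} (\<lambda>t. p_kernel n v c t * t ^ m)"
    and "(LINT t:{0..}|lborel. p_kernel n v c t * t ^ m)
        = c * Gamma (real n / c + real v - 1) / (Gamma (real v) * Gamma (real n / c)) * c ^ (v - 1)
          * (1 / (real (v + m) * Cj \<sigma> (v + m) (v + m) * c ^ (v + m)))"
proof -
  define A where "A = c * Gamma (real n / c + real v - 1) / (Gamma (real v) * Gamma (real n / c)) * c ^ (v - 1)"
  have sp: "\<sigma> > 0" using assms by (simp add: \<sigma>_def)
  have v1: "v + m \<ge> 1" using assms by simp
  have e: "p_kernel n v c t * t ^ m = A * (t^(v + m - 1) * (1 + c*t) powr (-(\<sigma> + real (v + m))))" for t
  proof -
    have ex: "\<sigma> + real (v + m) = real n / c + real v - 1" by (simp add: \<sigma>_def)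
    have pw: "t ^ (v - 1) * t ^ m = t ^ (v + m - 1)" using assms by (simp add: power_add[symmetric])
    have q: "(1 + c*t) powr (-(real n / c + real v - 1)) = 1 / (1+c*t) powr (real n / c + real v - 1)"
      by (rule powr_minus_divide)
    show ?thesis unfolding p_kernel_def A_def ex q pw[symmetric] power_mult_distrib
      by simp
  qed
  note b = beta_t[OF sp assms(1) v1]
  show "set_integrable lborel {0..} (\<lambda>t. p_kernel n v c t * t ^ m)"
    unfolding e using b(1) by (rule set_integrable_mult_right)
  show "(LINT t:{0..}|lborel. p_kernel n v c t * t ^ m)
        = c * Gamma (real n / c + real v - 1) / (Gamma (real v) * Gamma (real n / c)) * c ^ (v - 1)
          * (1 / (real (v + m) * Cj \<sigma> (v + m) (v + m) * c ^ (v + m)))"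
    unfolding e set_integral_mult_right b(2) A_def ..
qed


lemma Gamma_nat: "v \<ge> 1 \<Longrightarrow> Gamma (real v) = fact (v - 1)"
  using Gamma_fact[of "v - 1"] by (simp add: of_nat_diff)

lemma moment0:
  assumes "c > 0" "real n > c" "v \<ge> 1"
  shows "set_integrable lborel {0..} (p_kernel n v c)"
    and "(LINT t:{0..}|lborel. p_kernel n v c t) = c / (real n - c)"
proof -
  have s: "real n / c - 1 - real 0 > 0" using assms by (simp add: field_simps)
  note r = p_kernel_moment[OF assms(1) s assms(3)]
  show "set_integrable lborel {0..} (p_kernel n v c)" using r(1) by simp
  define S where "S = real n / c"
  have S1: "S - 1 > 0" using s by (simp add: S_def)
  have G: "Gamma S = (S - 1) * Gamma (S - 1)" using Gp1[OF S1] by simp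
  have pos: "Gamma (S - 1) > 0" "Gamma (S + real v - 1) > 0" using S1 assms by (auto intro!: Gamma_real_pos)
  have pos': "Gamma (S - 1) \<noteq> 0" "Gamma (S + real v - 1) \<noteq> 0" using pos by auto
  have fv: "fact v = real v * fact (v - 1)" using assms by (cases v) auto
  have cv: "c ^ v = c ^ (v - 1) * c" using assms by (cases v) auto
  have "(LINT t:{0..}|lborel. p_kernel n v c t) = (LINT t:{0..}|lborel. p_kernel n v c t * t ^ 0)" by simp
  also have "\<dots> = c * Gamma (S + real v - 1) / (Gamma (real v) * Gamma S) * c ^ (v - 1)
          * (1 / (real v * (Gamma (S - 1 + real v) / (fact v * Gamma (S - 1))) * c ^ v))"
    unfolding r(2) Cj_def S_def by simp
  also have "S - 1 + real v = S + real v - 1" by simp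
  also have "c * Gamma (S + real v - 1) / (Gamma (real v) * Gamma S) * c ^ (v - 1)
          * (1 / (real v * (Gamma (S + real v - 1) / (fact v * Gamma (S - 1))) * c ^ v)) = 1 / (S - 1)"
    unfolding Gamma_nat[OF assms(3)] G fv cv using pos' assms S1 by (simp add: field_simps)
  also have "1 / (S - 1) = c / (real n - c)" using assms by (simp add: S_def field_simps)
  finally show "(LINT t:{0..}|lborel. p_kernel n v c t) = c / (real n - c)" .
qed

lemma alg2: fixes c g h F Q P V V1 W :: real
  assumes "c \<noteq> 0" "g \<noteq> 0" "h \<noteq> 0" "F \<noteq> 0" "Q \<noteq> 0" "P \<noteq> 0" "W \<noteq> 0"
  shows "c * g / (F * (Q * h)) * P * (1 / (W * (g / (W * V1 * V * F * h)) * (P * c * c^2))) = V * V1 * (h / (Q * h * c^2))"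
  using assms by (simp add: field_simps power2_eq_square)

definition D2 :: "nat \<Rightarrow> real \<Rightarrow> real" where
  "D2 n c = Gamma (real n / c - 3) / (Gamma (real n / c) * c ^ 2)"

lemma moment2:
  assumes "c > 0" "real n > 3 * c" "v \<ge> 1"
  shows "set_integrable lborel {0..} (\<lambda>t. p_kernel n v c t * t ^ 2)"
    and "(LINT t:{0..}|lborel. p_kernel n v c t * t ^ 2) = real v * real (v + 1) * D2 n c"
proof -
  have s: "real n / c - 1 - real 2 > 0" using assms by (simp add: field_simps)
  note r = p_kernel_moment[OF assms(1) s assms(3)]
  show "set_integrable lborel {0..} (\<lambda>t. p_kernel n v c t * t ^ 2)" using r(1) by simp
  define S where "S = real n / c"
  have S3: "S - 3 > 0" using s by (simp add: S_def)
  have G: "Gamma S = (S - 1) * (S - 2) * (S - 3) * Gamma (S - 3)"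
  proof -
    have "Gamma S = (S - 1) * Gamma (S - 1)" using Gp1[of "S - 1"] S3 by simp
    also have "Gamma (S - 1) = (S - 2) * Gamma (S - 2)" using Gp1[of "S - 2"] S3 by simp
    also have "Gamma (S - 2) = (S - 3) * Gamma (S - 3)" using Gp1[of "S - 3"] S3 by simp
    finally show ?thesis by simp
  qed
  have pos: "Gamma (S - 3) > 0" "Gamma (S + real v - 1) > 0" using S3 assms by (auto intro!: Gamma_real_pos)
  have pos': "Gamma (S - 3) \<noteq> 0" "Gamma (S + real v - 1) \<noteq> 0" using pos by auto
  define Q where "Q = (S - 1) * (S - 2) * (S - 3)"
  have nz: "Q \<noteq> 0" using S3 by (auto simp: Q_def)
  have G': "Gamma S = Q * Gamma (S - 3)" using G by (simp add: Q_def)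
  have fv: "fact (v + 2) = real (v + 2) * real (v + 1) * real v * fact (v - 1)"
    using assms by (cases v) (auto simp: algebra_simps)
  have cv: "c ^ (v + 2) = c ^ (v - 1) * c * c ^ 2" using assms by (cases v) (auto simp: power_add power2_eq_square)
  have "(LINT t:{0..}|lborel. p_kernel n v c t * t ^ 2) = c * Gamma (S + real v - 1) / (Gamma (real v) * Gamma S) * c ^ (v - 1)
          * (1 / (real (v + 2) * (Gamma (S - 1 - 2 + real (v + 2)) / (fact (v + 2) * Gamma (S - 1 - 2))) * c ^ (v + 2)))"
    unfolding r(2) Cj_def S_def by simp
  also have "S - 1 - 2 + real (v + 2) = S + real v - 1" by simp
  also have "S - 1 - 2 = S - 3" by simp
  also have "c * Gamma (S + real v - 1) / (Gamma (real v) * Gamma S) * c ^ (v - 1)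
          * (1 / (real (v + 2) * (Gamma (S + real v - 1) / (fact (v + 2) * Gamma (S - 3))) * c ^ (v + 2)))
        = real v * real (v + 1) * D2 n c"
    unfolding Gamma_nat[OF assms(3)] D2_def S_def[symmetric] G' fv cv
    by (rule alg2) (use pos' assms nz in auto)
  finally show "(LINT t:{0..}|lborel. p_kernel n v c t * t ^ 2) = real v * real (v + 1) * D2 n c" .
qed


definition Bj :: "real \<Rightarrow> real \<Rightarrow> nat \<Rightarrow> real" where
  "Bj b y k = abel b k y * exp (- (real k * b)) / fact k"

lemma Bj_le_Mj: assumes "0 \<le> b" "b < 1" "0 \<le> y" shows "Bj b y k \<le> Mj b y k"
proof -
  have "(\<lambda>N. aN b y k N) \<longlonglongrightarrow> Bj b y k" unfolding Bj_def by (rule aN_lim[OF assms(1,2)])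
  then show ?thesis by (rule LIMSEQ_le_const2) (use aN_bound[OF assms] in auto)
qed

lemma Bj_nonneg: "0 \<le> b \<Longrightarrow> 0 \<le> y \<Longrightarrow> 0 \<le> Bj b y k"
  by (simp add: Bj_def abel_nonneg)

lemma W_eq: "omega_beta b (Suc k) y = exp (- y) * Bj b y (Suc k)"
proof -
  have "exp (- (y + real (Suc k) * b)) = exp (- y) * exp (- (real (Suc k) * b))"
    by (simp add: exp_add[symmetric])
  then show ?thesis unfolding omega_beta_def Bj_def abel_def by simp
qed

lemma W_nonneg: "0 \<le> b \<Longrightarrow> 0 \<le> y \<Longrightarrow> 0 \<le> omega_beta b (Suc k) y"
  unfolding W_eq using Bj_nonneg by simp

lemma W_sum: assumes "0 \<le> b" "b < 1" "0 \<le> y"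
  shows "summable (\<lambda>k. omega_beta b (Suc k) y)" "(\<Sum>k. omega_beta b (Suc k) y) = 1 - exp (- y)"
proof -
  have s: "summable (Bj b y)" using jain(1)[OF assms] unfolding Bj_def .
  have v: "suminf (Bj b y) = exp y" using jain(2)[OF assms] unfolding Bj_def .
  have s1: "summable (\<lambda>k. Bj b y (Suc k))" using s by (simp add: summable_Suc_iff)
  have v1: "(\<Sum>k. Bj b y (Suc k)) = exp y - 1" using suminf_split_head[OF s] v by (simp add: Bj_def abel_def)
  show "summable (\<lambda>k. omega_beta b (Suc k) y)" unfolding W_eq using s1 by (rule summable_mult)
  show "(\<Sum>k. omega_beta b (Suc k) y) = 1 - exp (- y)" unfolding W_eq suminf_mult[OF s1] v1
    by (simp add: algebra_simps exp_minus field_simps)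
qed

lemma W_poly: assumes "0 \<le> b" "b < 1" "0 \<le> y"
  shows "summable (\<lambda>k. omega_beta b (Suc k) y * (real (Suc k) * real (Suc k + 1)))"
proof -
  have s: "summable (\<lambda>k. real k ^ 2 * Mj b y k)" by (rule summable_Mj[OF assms])
  then have s1: "summable (\<lambda>k. real (Suc k) ^ 2 * Mj b y (Suc k))"
    using summable_Suc_iff[of "\<lambda>k. real k ^ 2 * Mj b y k"] by blast
  have s2: "summable (\<lambda>k. 2 * exp (- y) * (real (Suc k) ^ 2 * Mj b y (Suc k)))"
    by (rule summable_mult[OF s1])
  show ?thesis
  proof (rule summable_comparison_test[OF _ s2], intro exI[of _ 0] allI impI)
    fix k :: nat
    have a: "real (Suc k) * real (Suc k + 1) \<le> 2 * real (Suc k) ^ 2" by (simp add: power2_eq_square)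
    have "norm (omega_beta b (Suc k) y * (real (Suc k) * real (Suc k + 1)))
        = exp (- y) * Bj b y (Suc k) * (real (Suc k) * real (Suc k + 1))"
      unfolding W_eq using Bj_nonneg assms by simp
    also have "\<dots> \<le> exp (- y) * Mj b y (Suc k) * (2 * real (Suc k) ^ 2)"
    proof -
      have h1: "exp (- y) * Bj b y (Suc k) \<le> exp (- y) * Mj b y (Suc k)"
        using Bj_le_Mj[OF assms] by (intro mult_left_mono) auto
      have h2: "0 \<le> exp (- y) * Mj b y (Suc k)" using Mj_nonneg assms by auto
      show ?thesis by (rule mult_mono[OF h1 a h2]) simp
    qed
    also have "\<dots> = 2 * exp (- y) * (real (Suc k) ^ 2 * Mj b y (Suc k))" by simp
    finally show "norm (omega_beta b (Suc k) y * (real (Suc k) * real (Suc k + 1)))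
        \<le> 2 * exp (- y) * (real (Suc k) ^ 2 * Mj b y (Suc k))" .
  qed
qed


definition qg :: "(real \<Rightarrow> real) \<Rightarrow> bool" where
  "qg g \<longleftrightarrow> continuous_on {0..} g \<and> (\<exists>M. \<forall>t\<ge>0. \<bar>g t\<bar> \<le> M * (1 + t^2))"

definition Iop :: "nat \<Rightarrow> real \<Rightarrow> nat \<Rightarrow> (real \<Rightarrow> real) \<Rightarrow> real" where
  "Iop n c k g = (LINT t:{0..}|lborel. p_kernel n (Suc k) c t * g t)"

definition Sop :: "nat \<Rightarrow> real \<Rightarrow> real \<Rightarrow> real \<Rightarrow> (real \<Rightarrow> real) \<Rightarrow> real" where
  "Sop n c b y g = (\<Sum>k. omega_beta b (Suc k) y * Iop n c k g)"

lemma jb_eq: "jain_baskakov n c b g x = (real n - c) / c * Sop n c b (real n * x) g + exp (- (real n * x)) * g 0"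
  unfolding jain_baskakov_def Sop_def Iop_def ..

lemma qg_add: "qg g \<Longrightarrow> qg h \<Longrightarrow> qg (\<lambda>t. g t + h t)"
proof -
  assume g: "qg g" and h: "qg h"
  obtain M1 where M1: "\<forall>t\<ge>0. \<bar>g t\<bar> \<le> M1 * (1 + t^2)" using g by (auto simp: qg_def)
  obtain M2 where M2: "\<forall>t\<ge>0. \<bar>h t\<bar> \<le> M2 * (1 + t^2)" using h by (auto simp: qg_def)
  have "\<forall>t\<ge>0. \<bar>g t + h t\<bar> \<le> (M1 + M2) * (1 + t^2)"
  proof (intro allI impI)
    fix t :: real assume "t \<ge> 0"
    then have a: "\<bar>g t\<bar> \<le> M1 * (1 + t^2)" "\<bar>h t\<bar> \<le> M2 * (1 + t^2)" using M1 M2 by auto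
    have e: "(M1 + M2) * (1 + t^2) = M1 * (1 + t^2) + M2 * (1 + t^2)" by (simp add: algebra_simps)
    show "\<bar>g t + h t\<bar> \<le> (M1 + M2) * (1 + t^2)" using abs_triangle_ineq[of "g t" "h t"] a e by linarith
  qed
  then show ?thesis using g h by (auto simp: qg_def intro!: continuous_intros)
qed

lemma qg_cmult: "qg g \<Longrightarrow> qg (\<lambda>t. a * g t)"
proof -
  assume g: "qg g"
  obtain M1 where M1: "\<forall>t\<ge>0. \<bar>g t\<bar> \<le> M1 * (1 + t^2)" using g by (auto simp: qg_def)
  have "\<forall>t\<ge>0. \<bar>a * g t\<bar> \<le> (\<bar>a\<bar> * M1) * (1 + t^2)"
    using M1 by (auto simp: abs_mult mult.assoc intro: mult_left_mono)
  then show ?thesis using g by (auto simp: qg_def intro!: continuous_intros)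
qed

lemma qg_const: "qg (\<lambda>t. a)"
proof -
  have "\<forall>t\<ge>0. \<bar>a\<bar> \<le> \<bar>a\<bar> * (1 + t^2)" by (auto intro: mult_left_le_one_le simp: mult_le_cancel_left1)
  then show ?thesis by (auto simp: qg_def)
qed

lemma qg_sq: "qg (\<lambda>t. (t - x)^2)"
proof -
  have "\<forall>t\<ge>0. \<bar>(t - x)^2\<bar> \<le> (2 + 2 * x^2) * (1 + t^2)"
  proof (intro allI impI)
    fix t :: real
    have e: "2 * t^2 + 2 * x^2 - (t - x)^2 = (t + x)^2" by (simp add: power2_eq_square algebra_simps)
    have "(t + x)^2 \<ge> 0" by simp
    then have "(t - x)^2 \<le> 2 * t^2 + 2 * x^2" using e by linarith
    also have "\<dots> \<le> (2 + 2 * x^2) * (1 + t^2)" by (simp add: algebra_simps)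
    finally show "\<bar>(t - x)^2\<bar> \<le> (2 + 2 * x^2) * (1 + t^2)" by simp
  qed
  then show ?thesis by (auto simp: qg_def intro!: continuous_intros)
qed

context
  fixes n :: nat and c b y :: real
  assumes cpos: "c > 0" and n3: "real n > 3 * c" and b0: "0 \<le> b" and b1: "b < 1" and y0: "0 \<le> y"
begin

lemma nc: "real n > c" using cpos n3 by linarith

lemma pk_nonneg: "t \<ge> 0 \<Longrightarrow> p_kernel n (Suc k) c t \<ge> 0"
  using p_kernel_nonneg[OF cpos nc] by simp

lemma D2_nonneg: "D2 n c \<ge> 0"
proof -
  have "real n / c - 3 > 0" "real n / c > 0" using cpos n3 by (auto simp: field_simps)
  then show ?thesis unfolding D2_def using cpos by (auto intro!: divide_nonneg_pos Gamma_real_pos)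
qed

lemma bound_int: "set_integrable lborel {0..} (\<lambda>t. M * (p_kernel n (Suc k) c t + p_kernel n (Suc k) c t * t^2))"
  using moment0(1)[OF cpos nc, of "Suc k"] moment2(1)[OF cpos n3, of "Suc k"]
  by (intro set_integrable_mult_right set_integral_add(1)) auto

lemma bound_val: "(LINT t:{0..}|lborel. M * (p_kernel n (Suc k) c t + p_kernel n (Suc k) c t * t^2))
   = M * (c / (real n - c) + real (Suc k) * real (Suc k + 1) * D2 n c)"
  using moment0[OF cpos nc, of "Suc k"] moment2[OF cpos n3, of "Suc k"]
  by (simp add: set_integral_add(2))

lemma Iop_int: assumes "qg g" shows "set_integrable lborel {0..} (\<lambda>t. p_kernel n (Suc k) c t * g t)"
proof -
  obtain M where M: "\<forall>t\<ge>0. \<bar>g t\<bar> \<le> M * (1 + t^2)" using assms by (auto simp: qg_def)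
  have cg: "continuous_on {0..} g" using assms by (auto simp: qg_def)
  have M0: "M \<ge> 0" using M[rule_format, of 0] by simp
  have m1: "(\<lambda>x. indicator {0..} x *\<^sub>R g x) \<in> borel_measurable borel"
    by (rule borel_measurable_continuous_on_indicator) (use cg in auto)
  have eq: "(\<lambda>x. indicator {0..} x *\<^sub>R (p_kernel n (Suc k) c x * g x))
      = (\<lambda>x. p_kernel n (Suc k) c x * (indicator {0..} x *\<^sub>R g x))"
    by (auto simp: fun_eq_iff indicator_def)
  have meas: "set_borel_measurable lborel {0..} (\<lambda>t. p_kernel n (Suc k) c t * g t)"
    unfolding set_borel_measurable_def eq
    using borel_measurable_times[OF p_kernel_meas m1] by simp
  show ?thesis
  proof (rule set_integrable_bound[OF bound_int meas])
    show "AE x in lborel. x \<in> {0..} \<longrightarrow> norm (p_kernel n (Suc k) c x * g x)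
        \<le> norm (M * (p_kernel n (Suc k) c x + p_kernel n (Suc k) c x * x^2))"
    proof (intro AE_I2 impI)
      fix x :: real assume "x \<in> {0..}"
      then have x: "x \<ge> 0" by simp
      have p: "p_kernel n (Suc k) c x \<ge> 0" using pk_nonneg x .
      have "norm (p_kernel n (Suc k) c x * g x) = p_kernel n (Suc k) c x * \<bar>g x\<bar>" using p by (simp add: abs_mult)
      also have "\<dots> \<le> p_kernel n (Suc k) c x * (M * (1 + x^2))" using M x p by (intro mult_left_mono) auto
      also have "\<dots> = M * (p_kernel n (Suc k) c x + p_kernel n (Suc k) c x * x^2)" by (simp add: algebra_simps)
      also have "\<dots> \<le> norm (M * (p_kernel n (Suc k) c x + p_kernel n (Suc k) c x * x^2))" by simp
      finally show "norm (p_kernel n (Suc k) c x * g x) \<le> norm (M * (p_kernel n (Suc k) c x + p_kernel n (Suc k) c x * x^2))" .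
    qed
  qed
qed

lemma Iop_bound: assumes "qg g" "\<forall>t\<ge>0. \<bar>g t\<bar> \<le> M * (1 + t^2)"
  shows "\<bar>Iop n c k g\<bar> \<le> M * (c / (real n - c) + real (Suc k) * real (Suc k + 1) * D2 n c)"
proof -
  have "\<bar>Iop n c k g\<bar> \<le> (LINT t:{0..}|lborel. norm (p_kernel n (Suc k) c t * g t))"
    unfolding Iop_def using set_integral_norm_bound[OF Iop_int[OF assms(1)]] by simp
  also have "\<dots> \<le> (LINT t:{0..}|lborel. M * (p_kernel n (Suc k) c t + p_kernel n (Suc k) c t * t^2))"
  proof (rule set_integral_mono[OF set_integrable_norm[OF Iop_int[OF assms(1)]] bound_int])
    fix t :: real assume "t \<in> {0..}"
    then have x: "t \<ge> 0" by simp
    have p: "p_kernel n (Suc k) c t \<ge> 0" using pk_nonneg x .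
    have "norm (p_kernel n (Suc k) c t * g t) = p_kernel n (Suc k) c t * \<bar>g t\<bar>" using p by (simp add: abs_mult)
    also have "\<dots> \<le> p_kernel n (Suc k) c t * (M * (1 + t^2))" using assms(2) x p by (intro mult_left_mono) auto
    also have "\<dots> = M * (p_kernel n (Suc k) c t + p_kernel n (Suc k) c t * t^2)" by (simp add: algebra_simps)
    finally show "norm (p_kernel n (Suc k) c t * g t) \<le> M * (p_kernel n (Suc k) c t + p_kernel n (Suc k) c t * t^2)" .
  qed
  also have "\<dots> = M * (c / (real n - c) + real (Suc k) * real (Suc k + 1) * D2 n c)" by (rule bound_val)
  finally show ?thesis .
qed

lemma Sop_summable: assumes "qg g" shows "summable (\<lambda>k. omega_beta b (Suc k) y * Iop n c k g)"
proof -
  obtain M where M: "\<forall>t\<ge>0. \<bar>g t\<bar> \<le> M * (1 + t^2)" using assms by (auto simp: qg_def)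
  have s: "summable (\<lambda>k. M * (c / (real n - c)) * omega_beta b (Suc k) y
      + M * D2 n c * (omega_beta b (Suc k) y * (real (Suc k) * real (Suc k + 1))))"
    by (intro summable_add summable_mult W_sum(1)[OF b0 b1 y0] W_poly[OF b0 b1 y0])
  show ?thesis
  proof (rule summable_comparison_test[OF _ s], intro exI[of _ 0] allI impI)
    fix k :: nat
    have w: "omega_beta b (Suc k) y \<ge> 0" using W_nonneg b0 y0 .
    have "norm (omega_beta b (Suc k) y * Iop n c k g) = omega_beta b (Suc k) y * \<bar>Iop n c k g\<bar>"
      using w by (simp add: abs_mult)
    also have "\<dots> \<le> omega_beta b (Suc k) y * (M * (c / (real n - c) + real (Suc k) * real (Suc k + 1) * D2 n c))"
      using Iop_bound[OF assms M] w by (intro mult_left_mono) auto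
    also have "\<dots> = M * (c / (real n - c)) * omega_beta b (Suc k) y
      + M * D2 n c * (omega_beta b (Suc k) y * (real (Suc k) * real (Suc k + 1)))"
      by (simp add: algebra_simps)
    finally show "norm (omega_beta b (Suc k) y * Iop n c k g) \<le> M * (c / (real n - c)) * omega_beta b (Suc k) y
      + M * D2 n c * (omega_beta b (Suc k) y * (real (Suc k) * real (Suc k + 1)))" .
  qed
qed

lemma Iop_add: "qg g \<Longrightarrow> qg h \<Longrightarrow> Iop n c k (\<lambda>t. g t + h t) = Iop n c k g + Iop n c k h"
proof -
  assume g: "qg g" and h: "qg h"
  note r = set_integral_add(2)[OF Iop_int[OF g, of k] Iop_int[OF h, of k]]
  show ?thesis unfolding Iop_def distrib_left r ..
qed

lemma Iop_cmult: "Iop n c k (\<lambda>t. a * g t) = a * Iop n c k g"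
proof -
  have "(\<lambda>t. p_kernel n (Suc k) c t * (a * g t)) = (\<lambda>t. a * (p_kernel n (Suc k) c t * g t))"
    by (auto simp: fun_eq_iff)
  then show ?thesis unfolding Iop_def by simp
qed

lemma Iop_mono: "qg g \<Longrightarrow> qg h \<Longrightarrow> (\<And>t. t \<ge> 0 \<Longrightarrow> g t \<le> h t) \<Longrightarrow> Iop n c k g \<le> Iop n c k h"
  unfolding Iop_def
  by (rule set_integral_mono[OF Iop_int Iop_int]) (auto intro!: mult_left_mono pk_nonneg)

lemma Iop_one: "Iop n c k (\<lambda>t. 1) = c / (real n - c)"
  unfolding Iop_def using moment0(2)[OF cpos nc, of "Suc k"] by simp

lemma Sop_add: "qg g \<Longrightarrow> qg h \<Longrightarrow> Sop n c b y (\<lambda>t. g t + h t) = Sop n c b y g + Sop n c b y h"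
  unfolding Sop_def Iop_add distrib_left
  by (intro suminf_add[symmetric] Sop_summable)

lemma Sop_cmult: "qg g \<Longrightarrow> Sop n c b y (\<lambda>t. a * g t) = a * Sop n c b y g"
proof -
  assume g: "qg g"
  have "(\<lambda>k. omega_beta b (Suc k) y * Iop n c k (\<lambda>t. a * g t)) = (\<lambda>k. a * (omega_beta b (Suc k) y * Iop n c k g))"
    unfolding Iop_cmult by (auto simp: fun_eq_iff)
  then show ?thesis unfolding Sop_def using suminf_mult[OF Sop_summable[OF g], of a] by simp
qed

lemma Sop_mono: "qg g \<Longrightarrow> qg h \<Longrightarrow> (\<And>t. t \<ge> 0 \<Longrightarrow> g t \<le> h t) \<Longrightarrow> Sop n c b y g \<le> Sop n c b y h"
  unfolding Sop_def
  by (intro suminf_le Sop_summable allI mult_left_mono Iop_mono W_nonneg b0 y0) auto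

lemma Sop_one: "Sop n c b y (\<lambda>t. 1) = c / (real n - c) * (1 - exp (- y))"
  unfolding Sop_def Iop_one using suminf_mult2[OF W_sum(1)[OF b0 b1 y0], of "c / (real n - c)"] W_sum(2)[OF b0 b1 y0]
  by (simp add: mult.commute)

end


lemma mod_bdd: fixes f :: "real \<Rightarrow> real" assumes "\<forall>y\<ge>0. \<bar>f y\<bar> \<le> M * (1 + y^2)" "bb \<ge> 0"
  shows "bdd_above {\<bar>f t - f x\<bar> | x t. x \<in> {0..bb} \<and> t \<in> {0..bb} \<and> \<bar>t - x\<bar> \<le> d}"
proof (rule bdd_aboveI[where M = "2 * (M * (1 + bb^2))"], clarify)
  fix x t :: real assume h: "x \<in> {0..bb}" "t \<in> {0..bb}"
  have "x^2 \<le> bb^2" "t^2 \<le> bb^2" using h by (auto intro!: power_mono)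
  moreover have "\<bar>f x\<bar> \<le> M * (1 + x^2)" "\<bar>f t\<bar> \<le> M * (1 + t^2)" using assms h by auto
  moreover have "M \<ge> 0" using assms(1)[rule_format, of 0] by simp
  ultimately have "\<bar>f x\<bar> \<le> M * (1 + bb^2)" "\<bar>f t\<bar> \<le> M * (1 + bb^2)"
    by (meson add_left_mono mult_left_mono order_trans)+
  then show "\<bar>f t - f x\<bar> \<le> 2 * (M * (1 + bb^2))" by linarith
qed

lemma mod_ge: fixes f :: "real \<Rightarrow> real" assumes "\<forall>y\<ge>0. \<bar>f y\<bar> \<le> M * (1 + y^2)" "bb \<ge> 0"
  and "x \<in> {0..bb}" "t \<in> {0..bb}" "\<bar>t - x\<bar> \<le> d"
  shows "\<bar>f t - f x\<bar> \<le> modulus_cont bb f d"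
  unfolding modulus_cont_def
  by (rule cSup_upper[OF _ mod_bdd[OF assms(1,2)]]) (use assms in blast)

lemma mod_nonneg: fixes f :: "real \<Rightarrow> real" assumes "\<forall>y\<ge>0. \<bar>f y\<bar> \<le> M * (1 + y^2)" "bb \<ge> 0" "d \<ge> 0"
  shows "0 \<le> modulus_cont bb f d"
  using mod_ge[OF assms(1,2), of 0 0 d] assms by simp

lemma mod_chain: fixes f :: "real \<Rightarrow> real" assumes "\<forall>y\<ge>0. \<bar>f y\<bar> \<le> M * (1 + y^2)" "bb \<ge> 0" "d > 0"
  shows "\<forall>x t. x \<in> {0..bb} \<longrightarrow> t \<in> {0..bb} \<longrightarrow> \<bar>t - x\<bar> \<le> real (Suc j) * d
     \<longrightarrow> \<bar>f t - f x\<bar> \<le> real (Suc j) * modulus_cont bb f d"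
proof (induction j)
  case 0
  then show ?case using mod_ge[OF assms(1,2)] by simp
next
  case (Suc j)
  have w0: "0 \<le> modulus_cont bb f d" using mod_nonneg assms by auto
  show ?case
  proof (intro allI impI)
    fix x t assume x: "x \<in> {0..bb}" and t: "t \<in> {0..bb}" and tx: "\<bar>t - x\<bar> \<le> real (Suc (Suc j)) * d"
    show "\<bar>f t - f x\<bar> \<le> real (Suc (Suc j)) * modulus_cont bb f d"
    proof (cases "\<bar>t - x\<bar> \<le> d")
      case True
      then have "\<bar>f t - f x\<bar> \<le> modulus_cont bb f d" using mod_ge[OF assms(1,2) x t] by simp
      also have "\<dots> \<le> real (Suc (Suc j)) * modulus_cont bb f d" using w0 by (simp add: mult_le_cancel_right1)
      finally show ?thesis .
    next
      case False
      define s where "s = (if x \<le> t then x + d else x - d)"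
      have s: "s \<in> {0..bb}" "\<bar>s - x\<bar> \<le> d" "\<bar>t - s\<bar> \<le> real (Suc j) * d"
        using x t tx False assms(3) by (auto simp: s_def algebra_simps split: if_splits)
      have "\<bar>f t - f x\<bar> \<le> \<bar>f t - f s\<bar> + \<bar>f s - f x\<bar>" by linarith
      also have "\<dots> \<le> real (Suc j) * modulus_cont bb f d + modulus_cont bb f d"
        using Suc.IH s t x mod_ge[OF assms(1,2) x s(1) s(2)] by (meson add_mono)
      also have "\<dots> = real (Suc (Suc j)) * modulus_cont bb f d" by (simp add: algebra_simps)
      finally show ?thesis .
    qed
  qed
qed

lemma mod_quad: fixes f :: "real \<Rightarrow> real" assumes "\<forall>y\<ge>0. \<bar>f y\<bar> \<le> M * (1 + y^2)" "bb \<ge> 0" "d > 0"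
  and x: "x \<in> {0..bb}" and t: "t \<in> {0..bb}"
  shows "\<bar>f t - f x\<bar> \<le> (1 + (t - x)^2 / d^2) * modulus_cont bb f d"
proof -
  define l where "l = \<bar>t - x\<bar> / d"
  have w0: "0 \<le> modulus_cont bb f d" using mod_nonneg assms by auto
  have l2: "l^2 = (t - x)^2 / d^2" by (simp add: l_def power_divide)
  show ?thesis
  proof (cases "l \<le> 1")
    case True
    then have "\<bar>t - x\<bar> \<le> d" using assms(3) by (simp add: l_def field_simps)
    then have "\<bar>f t - f x\<bar> \<le> modulus_cont bb f d" using mod_ge[OF assms(1,2) x t] by simp
    also have "\<dots> \<le> (1 + (t - x)^2 / d^2) * modulus_cont bb f d" using w0 by (simp add: mult_le_cancel_right1)
    finally show ?thesis .
  next
    case False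
    define j where "j = nat \<lceil>l\<rceil> - 1"
    have cl: "real (Suc j) = of_int \<lceil>l\<rceil>" using False by (simp add: j_def)
    have "\<bar>t - x\<bar> = l * d" using assms(3) by (simp add: l_def)
    also have "\<dots> \<le> real (Suc j) * d" unfolding cl using assms(3) by (intro mult_right_mono) auto
    finally have "\<bar>f t - f x\<bar> \<le> real (Suc j) * modulus_cont bb f d"
      using mod_chain[OF assms(1-3), of j] x t by blast
    also have "\<dots> \<le> (1 + l^2) * modulus_cont bb f d"
    proof (rule mult_right_mono[OF _ w0])
      have "real (Suc j) \<le> l + 1" unfolding cl by linarith
      also have "l \<le> l^2" using False by (simp add: power2_eq_square)
      finally show "real (Suc j) \<le> 1 + l^2" by simp
    qed
    finally show ?thesis unfolding l2 .
  qed
qed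

lemma pointwise: fixes f :: "real \<Rightarrow> real" assumes M: "\<forall>y\<ge>0. \<bar>f y\<bar> \<le> M * (1 + y^2)" and a: "a > 0" and d: "d > 0"
  and x: "x \<in> {0..a}" and t: "t \<ge> 0"
  shows "\<bar>f t - f x\<bar> \<le> 6 * M * (1 + a^2) * (t - x)^2 + (1 + (t - x)^2 / d^2) * modulus_cont (a + 1) f d"
proof -
  have M0: "M \<ge> 0" using M[rule_format, of 0] by simp
  have w0: "0 \<le> modulus_cont (a + 1) f d" using mod_nonneg[OF M, of "a + 1" d] a d by auto
  have A0: "0 \<le> 6 * M * (1 + a^2) * (t - x)^2" using M0 by simp
  show ?thesis
  proof (cases "t \<le> a + 1")
    case True
    have "\<bar>f t - f x\<bar> \<le> (1 + (t - x)^2 / d^2) * modulus_cont (a + 1) f d"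
      by (rule mod_quad[OF M _ d]) (use x t True a in auto)
    then show ?thesis using A0 by linarith
  next
    case False
    define e where "e = t - x"
    have e1: "e > 1" using False x by (simp add: e_def)
    have x0: "0 \<le> x" "x \<le> a" using x by auto
    have "\<bar>f t - f x\<bar> \<le> M * (1 + t^2) + M * (1 + x^2)" using M t x0 by (smt (verit))
    also have "\<dots> = M * (2 + t^2 + x^2)" by (simp add: algebra_simps)
    also have "\<dots> \<le> M * (6 * (1 + a^2) * e^2)"
    proof (rule mult_left_mono[OF _ M0])
      have tt: "t = x + e" by (simp add: e_def)
      have xa: "x^2 \<le> a^2" using x0 by (intro power_mono) auto
      have h0: "0 \<le> (x - e)^2" by simp
      have h1: "(x - e)^2 = x^2 + e^2 - 2 * x * e" by (simp add: power2_eq_square algebra_simps)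
      have "2 * x * e \<le> x^2 + e^2" using h0 h1 by linarith
      then have "2 + t^2 + x^2 \<le> 2 + 3 * x^2 + 2 * e^2" unfolding tt by (simp add: power2_eq_square algebra_simps)
      also have "\<dots> \<le> 2 * e^2 + 3 * a^2 * e^2 + 2 * e^2"
      proof -
        have "e^2 \<ge> 1" using e1 by (simp add: power2_eq_square) (smt (verit) mult_less_cancel_left1)
        then have "3 * x^2 \<le> 3 * a^2 * e^2" using xa by (smt (verit) mult_left_mono zero_le_power2 mult.commute mult_le_cancel_right1)
        moreover have "2 \<le> 2 * e^2" using \<open>e^2 \<ge> 1\<close> by simp
        ultimately show ?thesis by linarith
      qed
      also have "\<dots> \<le> 6 * (1 + a^2) * e^2" by (simp add: algebra_simps)
      finally show "2 + t^2 + x^2 \<le> 6 * (1 + a^2) * e^2" .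
    qed
    also have "\<dots> = 6 * M * (1 + a^2) * (t - x)^2" by (simp add: e_def)
    finally show ?thesis using w0 by (smt (verit) divide_nonneg_nonneg mult_nonneg_nonneg zero_le_power2)
  qed
qed


lemma Sop_zero: "Sop n c b y (\<lambda>t. 0) = 0"
  unfolding Sop_def Iop_def by simp

lemma Sop_y0: "Sop n c b 0 g = 0"
  unfolding Sop_def omega_beta_def by simp

theorem theorem2:
  fixes c \<beta> a M :: real and n :: nat and f :: "real \<Rightarrow> real" and x :: real
  assumes "c > 0" and "0 \<le> \<beta>" and "\<beta> < 1" and "a > 0"
    and "real n > 3 * c"
    and "f \<in> C_rho0"
    and "\<forall>y\<ge>0. \<bar>f y\<bar> \<le> M * (1 + y^2)"
    and "x \<in> {0..a}"
  shows "\<bar>jain_baskakov n c \<beta> f x - f x\<bar>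
           \<le> 6 * M * (1 + a^2) * mu2 n c \<beta> x
             + 2 * modulus_cont (a + 1) f (sqrt (mu2 n c \<beta> x))"
proof -
  note cpos = assms(1) and b0 = assms(2) and b1 = assms(3) and n3 = assms(5) and Mf = assms(7)
  have x0: "0 \<le> x" "x \<le> a" using assms(8) by auto
  define y where "y = real n * x"
  have y0: "0 \<le> y" using x0 by (simp add: y_def)
  define K where "K = (real n - c) / c"
  define E where "E = exp (- y)"
  define sq where "sq = (\<lambda>t::real. (t - x)^2)"
  define \<mu> where "\<mu> = mu2 n c \<beta> x"
  have M0: "M \<ge> 0" using Mf[rule_format, of 0] by simp
  have nc: "real n > c" using cpos n3 by linarith
  have K0: "K > 0" unfolding K_def using cpos nc by simp
  have D: "jain_baskakov n c \<beta> g x = K * Sop n c \<beta> y g + E * g 0" for g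
    unfolding jb_eq K_def E_def y_def ..
  have qf: "qg f"
    using assms(6) unfolding C_rho0_def B_rho0_def qg_def by auto
  have qsq: "qg sq" unfolding sq_def by (rule qg_sq)
  have q1: "qg (\<lambda>t. 1)" by (rule qg_const)
  note Sadd = Sop_add[OF cpos n3 b0 b1 y0] and Scm = Sop_cmult[OF cpos n3 b0 b1 y0]
    and Smono = Sop_mono[OF cpos n3 b0 b1 y0] and S1 = Sop_one[OF cpos n3 b0 b1 y0]
  have KS1: "K * Sop n c \<beta> y (\<lambda>t. 1) = 1 - E"
    unfolding S1 K_def E_def using cpos nc by (simp add: field_simps)
  have mu_eq: "\<mu> = K * Sop n c \<beta> y sq + E * x^2"
    unfolding \<mu>_def mu2_def D sq_def by simp
  show ?thesis
  proof (cases "x = 0")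
    case True
    then have y: "y = 0" by (simp add: y_def)
    have "jain_baskakov n c \<beta> f x = f x" unfolding D y Sop_y0 E_def using True by simp
    moreover have "\<mu> = 0" unfolding mu_eq y Sop_y0 using True by simp
    moreover have "0 \<le> modulus_cont (a + 1) f (sqrt \<mu>)"
      by (rule mod_nonneg[OF Mf]) (use assms(4) \<open>\<mu> = 0\<close> in auto)
    ultimately show ?thesis by (simp add: \<mu>_def)
  next
    case False
    then have xp: "x > 0" using x0 by simp
    have Ssq: "Sop n c \<beta> y sq \<ge> 0"
      using Smono[OF qg_const qsq, of 0] Sop_zero[of n c \<beta> y] by (simp add: sq_def)
    have Ep: "E > 0" by (simp add: E_def)
    have mup: "\<mu> > 0" unfolding mu_eq using Ssq K0 Ep xp by (simp add: add_nonneg_pos mult_pos_pos)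
    define d where "d = sqrt \<mu>"
    have dp: "d > 0" using mup by (simp add: d_def)
    have d2: "d^2 = \<mu>" using mup by (simp add: d_def)
    define w where "w = modulus_cont (a + 1) f d"
    define A where "A = 6 * M * (1 + a^2)"
    define h where "h = (\<lambda>t. (A + w / \<mu>) * sq t + w * 1)"
    define g where "g = (\<lambda>t. f t + (- f x) * 1)"
    have qh: "qg h" unfolding h_def by (intro qg_add qg_cmult qsq q1)
    have qg': "qg g" unfolding g_def by (intro qg_add qg_cmult qf q1)
    have qnh: "qg (\<lambda>t. (-1) * h t)" by (intro qg_cmult qh)
    have pw: "\<bar>g t\<bar> \<le> h t" if "t \<ge> 0" for t
    proof -
      have "\<bar>f t - f x\<bar> \<le> A * (t - x)^2 + (1 + (t - x)^2 / d^2) * w"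
        unfolding A_def w_def by (rule pointwise[OF Mf assms(4) dp assms(8) that])
      also have "\<dots> = h t" unfolding h_def sq_def d2 by (simp add: algebra_simps)
      finally show ?thesis by (simp add: g_def)
    qed
    have Sg: "Sop n c \<beta> y g = Sop n c \<beta> y f + (- f x) * Sop n c \<beta> y (\<lambda>t. 1)"
      unfolding g_def Sadd[OF qf qg_cmult[OF q1]] Scm[OF q1] ..
    have Dg: "K * Sop n c \<beta> y g + E * g 0 = jain_baskakov n c \<beta> f x - f x"
    proof -
      have "K * Sop n c \<beta> y g + E * g 0 = K * Sop n c \<beta> y f - f x * (K * Sop n c \<beta> y (\<lambda>t. 1)) + E * (f 0 - f x)"
        unfolding Sg by (simp add: g_def algebra_simps)
      also have "\<dots> = jain_baskakov n c \<beta> f x - f x" unfolding KS1 D by (simp add: algebra_simps)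
      finally show ?thesis .
    qed
    have Sh: "Sop n c \<beta> y h = (A + w / \<mu>) * Sop n c \<beta> y sq + w * Sop n c \<beta> y (\<lambda>t. 1)"
      unfolding h_def Sadd[OF qg_cmult[OF qsq] qg_cmult[OF q1]] Scm[OF qsq] Scm[OF q1] ..
    have Dh: "K * Sop n c \<beta> y h + E * h 0 = A * \<mu> + 2 * w"
    proof -
      have "K * Sop n c \<beta> y h + E * h 0 = (A + w / \<mu>) * (K * Sop n c \<beta> y sq + E * x^2) + w * (K * Sop n c \<beta> y (\<lambda>t. 1) + E)"
        unfolding Sh by (simp add: h_def sq_def algebra_simps)
      also have "\<dots> = (A + w / \<mu>) * \<mu> + w" unfolding mu_eq[symmetric] KS1 by simp
      also have "\<dots> = A * \<mu> + 2 * w" using mup by (simp add: field_simps)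
      finally show ?thesis .
    qed
    have up: "K * Sop n c \<beta> y g + E * g 0 \<le> K * Sop n c \<beta> y h + E * h 0"
    proof (rule add_mono)
      show "K * Sop n c \<beta> y g \<le> K * Sop n c \<beta> y h"
        using Smono[OF qg' qh] pw K0 by (intro mult_left_mono) force+
      show "E * g 0 \<le> E * h 0" using pw[of 0] Ep by (intro mult_left_mono) auto
    qed
    have lo: "- (K * Sop n c \<beta> y h + E * h 0) \<le> K * Sop n c \<beta> y g + E * g 0"
    proof -
      have "Sop n c \<beta> y (\<lambda>t. (-1) * h t) \<le> Sop n c \<beta> y g"
        using Smono[OF qnh qg'] pw by (smt (verit) abs_ge_minus_self)
      then have "- Sop n c \<beta> y h \<le> Sop n c \<beta> y g" unfolding Scm[OF qh] by simp
      then have "K * (- Sop n c \<beta> y h) \<le> K * Sop n c \<beta> y g" using K0 by (intro mult_left_mono) auto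
      moreover have "E * (- h 0) \<le> E * g 0" using pw[of 0] Ep by (intro mult_left_mono) auto
      ultimately show ?thesis by (simp add: algebra_simps)
    qed
    have "\<bar>jain_baskakov n c \<beta> f x - f x\<bar> \<le> A * \<mu> + 2 * w"
      using up lo unfolding Dg Dh by linarith
    then show ?thesis by (simp add: A_def w_def d_def \<mu>_def)
  qed
qed

end
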